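(* Fix a class table and a security lattice as described in the context. Let $\Gamma$ be a typing context and $T$ a type. Suppose an expression $e$ that contains no abstract expressions is obtained from a single abstract expression $\mathit{eA}:[\Gamma;T]$ by a finite sequence of applications of the refinement rules (R1)–(R8) listed in the context, where each step is applied to some occurrence of an abstract expression anywhere inside the current expression. Then $e$ is well typed in SIFO with $\Gamma \vdash e : T$.
   Context: Security levels form a bounded upper semi-lattice $(L,\le)$ with least element $\bot$; $\mathit{lub}$ denotes least upper bound. Type modifiers: $\mathit{mdf}\in\{\mathtt{mut},\mathtt{imm},\mathtt{capsule},\mathtt{read}\}$, ordered by $\mathtt{capsule}\le \mathit{mdf}\le\mathtt{read}$ for every $\mathit{mdf}$ (reflexive; $\mathtt{mut}$ and $\mathtt{imm}$ incomparable). A type is $T = s\ \mathit{mdf}\ C$ with $s\in L$ and $C$ a class/interface name; $\mathit{sec}(T)=s$, $\mathit{mdf}(T)=\mathit{mdf}$, $\mathit{class}(T)=C$. A fixed class table gives classes $\mathtt{class}\ C\ \mathtt{implements}\ \overline{C}\ \{\overline F\ \overline{MD}\}$ and interfaces $\mathtt{interface}\ C\ \mathtt{extends}\ \overline C\ \{\overline{MH}\}$; $C\le C'$ is the reflexive–transitive closure of implements/extends. Fields have the form $s\ \mathtt{mut}\ C\ f$ or $s\ \mathtt{imm}\ C\ f$; $\mathit{fields}(C)$ is the ordered list $T_1 f_1\dots T_n f_n$ of fields of $C$. Method headers have the form $s\ \mathit{mdf}\ \mathtt{method}\ T\ m(T_1 x_1,\dots,T_n x_n)$. Subtyping: $s\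 \mathit{mdf}\ C\le s\ \mathit{mdf}'\ C'$ iff $C\le C'$ and $\mathit{mdf}\le\mathit{mdf}'$. For $T=s'\ \mathit{mdf}\ C$, $T[s]=\mathit{lub}(s,s')\ \mathit{mdf}\ C$, defined only if $s\le s'$ or $s'\le s$. The partial operation $\triangleright$ on modifiers: $\mathtt{mut}\triangleright \mathit{mdf}=\mathtt{capsule}\triangleright\mathit{mdf}=\mathit{mdf}$; $\mathtt{imm}\triangleright\mathit{mdf}=\mathit{mdf}\triangleright\mathtt{imm}=\mathtt{imm}$; $\mathtt{read}\triangleright\mathtt{mut}=\mathtt{read}$. $\mathit{methTypes}(C,m)$: if $s\ \mathit{mdf}\ \mathtt{method}\ T\ m(T_1x_1\dots T_nx_n)$ is declared in $C$ and $T_0=s\ \mathit{mdf}\ C$, then for every $s'\in L$ (where defined) it contains $T_0[s']\dots T_n[s']\to T[s']$, the same signature with every $\mathtt{mut}$ replaced by $\mathtt{capsule}$, and the same signature with every $\mathtt{read}$ replaced by $\mathtt{imm}$ and every $\mathtt{mut}$ by $\mathtt{capsule}$. Expressions (core fragment): $e ::= \mathit{eA}\mid x\mid e_0.f=e_1\mid e.f\mid e_0.m(e_1,\dots,e_n)\mid \mathtt{new}\ s\ C(e_1,\dots,e_n)$, where $\mathit{eA}$ ranges over abstract expressions, each annotated $\mathit{eA}:[\Gamma;T]$. A typing context is $\Gamma = x_1:T_1,\dots,x_n:T_n$; $\Gamma[\mathtt{mut}\backslash\mathtt{read}]$ replaces each $\mathtt{mut}$ modifier in $\Gamma$ by $\mathtt{read}$.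 SIFO typing ($\Gamma\vdash e:T$) is the least relation closed under: (Subsumption) $\Gamma\vdash e:T'$, $T'\le T$ $\Rightarrow$ $\Gamma\vdash e:T$; (T-Var) $\Gamma\vdash x:\Gamma(x)$; (Field Access) $\Gamma\vdash e_0:s_0\ \mathit{mdf}_0\ C_0$, $s_1\ \mathit{mdf}_1\ C_1\ f\in\mathit{fields}(C_0)$ $\Rightarrow$ $\Gamma\vdash e_0.f:\mathit{lub}(s_0,s_1)\ (\mathit{mdf}_0\triangleright\mathit{mdf}_1)\ C_1$; (Field Assign) $\Gamma\vdash e_0:s_0\ \mathtt{mut}\ C_0$, $\Gamma\vdash e_1:\mathit{lub}(s_0,s)\ \mathit{mdf}\ C$, $s\ \mathit{mdf}\ C\ f\in\mathit{fields}(C_0)$ $\Rightarrow$ $\Gamma\vdash e_0.f=e_1:\mathit{lub}(s_0,s)\ \mathit{mdf}\ C$; (Call) $\Gamma\vdash e_i:T_i$ for $i=0..n$, $T_0\dots T_n\to T\in\mathit{methTypes}(\mathit{class}(T_0),m)$, $\mathit{sec}(T)\ge\mathit{sec}(T_0)$, and $\mathit{sec}(T_i)\ge\mathit{sec}(T_0)$ whenever $\mathit{mdf}(T_i)\in\{\mathtt{mut},\mathtt{capsule}\}$ $\Rightarrow$ $\Gamma\vdash e_0.m(e_1\dots e_n):T$; (New) $\mathit{fields}(C)=T_1f_1\dots T_nf_n$, $\Gamma\vdash e_i:T_i[s]$ for all $i$ $\Rightarrow$ $\Gamma\vdash\mathtt{new}\ s\ C(e_1\dots e_n):s\ \mathtt{mut}\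 C$; (Prom) $\Gamma[\mathtt{mut}\backslash\mathtt{read}]\vdash e:s\ \mathtt{mut}\ C$ $\Rightarrow$ $\Gamma\vdash e:s\ \mathtt{capsule}\ C$; (Sec-Prom) $s'\le s$, $\Gamma\vdash e:s'\ \mathit{mdf}\ C$, $\mathit{mdf}\in\{\mathtt{imm},\mathtt{capsule}\}$ $\Rightarrow$ $\Gamma\vdash e:s\ \mathit{mdf}\ C$. Refinement rules (new abstract expressions are fresh, with the stated annotations): (R1 Variable) $\mathit{eA}:[\Gamma;T]$ becomes $x$ if $\Gamma(x)=T$. (R2 Field Assignment) $\mathit{eA}:[\Gamma;s_1\ \mathit{mdf}\ C]$ becomes $\mathit{eA}_0.f=\mathit{eA}_1$ with $\mathit{eA}_0:[\Gamma;s_0\ \mathtt{mut}\ C_0]$, $\mathit{eA}_1:[\Gamma;s_1\ \mathit{mdf}\ C]$, if $s\ \mathit{mdf}\ C\ f\in\mathit{fields}(C_0)$ and $s_1=\mathit{lub}(s_0,s)$. (R3 Field Access) $\mathit{eA}:[\Gamma;s\ \mathit{mdf}\ C]$ becomes $\mathit{eA}_0.f$ with $\mathit{eA}_0:[\Gamma;s_0\ \mathit{mdf}_0\ C_0]$, if $s_1\ \mathit{mdf}_1\ C\ f\in\mathit{fields}(C_0)$, $s=\mathit{lub}(s_0,s_1)$, $\mathit{mdf}_0\triangleright\mathit{mdf}_1=\mathit{mdf}$. (R4 Method Call) $\mathit{eA}:[\Gamma;T]$ becomes $\mathit{eA}_0.m(\mathit{eA}_1,\dots,\mathit{eA}_n)$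 with $\mathit{eA}_i:[\Gamma;T_i]$, if $T_0\dots T_n\to T\in\mathit{methTypes}(\mathit{class}(T_0),m)$, $\mathit{sec}(T)\ge\mathit{sec}(T_0)$, and for all $i\in\{1..n\}$ with $\mathit{mdf}(T_i)\in\{\mathtt{mut},\mathtt{capsule}\}$, $\mathit{sec}(T_i)\ge\mathit{sec}(T_0)$. (R5 Constructor) $\mathit{eA}:[\Gamma;s\ \mathtt{mut}\ C]$ becomes $\mathtt{new}\ s\ C(\mathit{eA}_1\dots\mathit{eA}_n)$ with $\mathit{eA}_i:[\Gamma;T_i[s]]$, if $\mathit{fields}(C)=T_1f_1\dots T_nf_n$. (R6 Subsumption) $\mathit{eA}:[\Gamma;T]$ becomes $\mathit{eA}_1:[\Gamma;T']$ if $T'\le T$. (R7 Security Promotion) $\mathit{eA}:[\Gamma;s\ \mathit{mdf}\ C]$ becomes $\mathit{eA}_1:[\Gamma;s'\ \mathit{mdf}\ C]$ if $\mathit{mdf}\in\{\mathtt{capsule},\mathtt{imm}\}$ and $s'\le s$. (R8 Modifier Promotion) $\mathit{eA}:[\Gamma;s\ \mathtt{capsule}\ C]$ becomes $\mathit{eA}_1:[\Gamma[\mathtt{mut}\backslash\mathtt{read}];s\ \mathtt{mut}\ C]$. *)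

theory Defs
  imports Main
begin

(* Security levels: a type 's of class bounded_semilattice_sup_bot
   (upper semilattice with least element bot); lub = sup. *)

datatype mdf = Mut | Imm | Capsule | Read

definition mdf_le :: "mdf \<Rightarrow> mdf \<Rightarrow> bool" where
  "mdf_le m m' \<longleftrightarrow> m = m' \<or> m = Capsule \<or> m' = Read"

datatype ('s, 'c) ty = Ty (sec: 's) (mdf: mdf) (cls: 'c)

(* method header  s mdf method T m(T1 x1, ..., Tn xn) *)
datatype ('s, 'c, 'm, 'v) mheader = MH 's mdf "('s, 'c) ty" 'm "(('s, 'c) ty \<times> 'v) list"

type_synonym ('s, 'c, 'v) ctx = "'v \<Rightarrow> ('s, 'c) ty option"

(* expressions; EAbs \<Gamma> T is an abstract expression eA:[\<Gamma>;T] *)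
datatype ('s, 'c, 'f, 'm, 'v) expr =
    EAbs "('s, 'c, 'v) ctx" "('s, 'c) ty"
  | Var 'v
  | FAssign "('s, 'c, 'f, 'm, 'v) expr" 'f "('s, 'c, 'f, 'm, 'v) expr"
  | FAcc "('s, 'c, 'f, 'm, 'v) expr" 'f
  | Call "('s, 'c, 'f, 'm, 'v) expr" 'm "('s, 'c, 'f, 'm, 'v) expr list"
  | New 's 'c "('s, 'c, 'f, 'm, 'v) expr list"

datatype ('s, 'c, 'f, 'm, 'v) decl =
    ClassDecl "'c list" "(('s, 'c) ty \<times> 'f) list"
              "(('s, 'c, 'm, 'v) mheader \<times> ('s, 'c, 'f, 'm, 'v) expr) list"
  | InterfaceDecl "'c list" "('s, 'c, 'm, 'v) mheader list"

type_synonym ('s, 'c, 'f, 'm, 'v) ctable = "'c \<Rightarrow> ('s, 'c, 'f, 'm, 'v) decl option"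

fun supers :: "('s, 'c, 'f, 'm, 'v) decl \<Rightarrow> 'c list" where
  "supers (ClassDecl cs _ _) = cs"
| "supers (InterfaceDecl cs _) = cs"

fun headers :: "('s, 'c, 'f, 'm, 'v) decl \<Rightarrow> ('s, 'c, 'm, 'v) mheader list" where
  "headers (ClassDecl _ _ mds) = map fst mds"
| "headers (InterfaceDecl _ mhs) = mhs"

definition fields :: "('s, 'c, 'f, 'm, 'v) ctable \<Rightarrow> 'c \<Rightarrow> (('s, 'c) ty \<times> 'f) list" where
  "fields CT C = (case CT C of Some (ClassDecl _ fs _) \<Rightarrow> fs | _ \<Rightarrow> [])"

definition wf_fields :: "('s, 'c, 'f, 'm, 'v) ctable \<Rightarrow> bool" where
  "wf_fields CT \<longleftrightarrow> (\<forall>C T f. (T, f) \<in> set (fields CT C) \<longrightarrow> mdf T \<in> {Mut, Imm})"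

definition is_subclass :: "('s, 'c, 'f, 'm, 'v) ctable \<Rightarrow> 'c \<Rightarrow> 'c \<Rightarrow> bool" where
  "is_subclass CT C C' \<longleftrightarrow>
     (C, C') \<in> {(A, B). \<exists>d. CT A = Some d \<and> B \<in> set (supers d)}\<^sup>*"

definition subtype :: "('s, 'c, 'f, 'm, 'v) ctable \<Rightarrow> ('s, 'c) ty \<Rightarrow> ('s, 'c) ty \<Rightarrow> bool" where
  "subtype CT T T' \<longleftrightarrow>
     sec T = sec T' \<and> is_subclass CT (cls T) (cls T') \<and> mdf_le (mdf T) (mdf T')"

definition lift :: "'s::bounded_semilattice_sup_bot \<Rightarrow> ('s, 'c) ty \<Rightarrow> ('s, 'c) ty option" where
  "lift s T = (if s \<le> sec T \<or> sec T \<le> s then Some (Ty (sup s (sec T)) (mdf T) (cls T)) else None)"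

fun vp :: "mdf \<Rightarrow> mdf \<Rightarrow> mdf option" where
  "vp Mut m = Some m"
| "vp Capsule m = Some m"
| "vp Imm _ = Some Imm"
| "vp Read Imm = Some Imm"
| "vp Read Mut = Some Read"
| "vp Read _ = None"

definition map_mdf :: "(mdf \<Rightarrow> mdf) \<Rightarrow> ('s, 'c) ty \<Rightarrow> ('s, 'c) ty" where
  "map_mdf g T = Ty (sec T) (g (mdf T)) (cls T)"

definition mut_to_capsule :: "mdf \<Rightarrow> mdf" where
  "mut_to_capsule m = (if m = Mut then Capsule else m)"

definition read_to_imm_mut_to_capsule :: "mdf \<Rightarrow> mdf" where
  "read_to_imm_mut_to_capsule m = (if m = Read then Imm else if m = Mut then Capsule else m)"

definition mut_to_read :: "mdf \<Rightarrow> mdf" where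
  "mut_to_read m = (if m = Mut then Read else m)"

definition ctx_mut_read :: "('s, 'c, 'v) ctx \<Rightarrow> ('s, 'c, 'v) ctx" where
  "ctx_mut_read \<Gamma> = (\<lambda>x. map_option (map_mdf mut_to_read) (\<Gamma> x))"

type_synonym ('s, 'c) msig = "('s, 'c) ty list \<times> ('s, 'c) ty"

definition map_sig :: "(mdf \<Rightarrow> mdf) \<Rightarrow> ('s, 'c) msig \<Rightarrow> ('s, 'c) msig" where
  "map_sig g sg = (map (map_mdf g) (fst sg), map_mdf g (snd sg))"

definition methTypes :: "('s::bounded_semilattice_sup_bot, 'c, 'f, 'm, 'v) ctable \<Rightarrow> 'c \<Rightarrow> 'm
                         \<Rightarrow> ('s, 'c) msig set" where
  "methTypes CT C m = {sg. \<exists>d s md T ps s' Ts' T'.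
      CT C = Some d \<and> MH s md T m ps \<in> set (headers d) \<and>
      those (map (lift s') (Ty s md C # map fst ps)) = Some Ts' \<and> lift s' T = Some T' \<and>
      (sg = (Ts', T') \<or> sg = map_sig mut_to_capsule (Ts', T')
        \<or> sg = map_sig read_to_imm_mut_to_capsule (Ts', T')) }"

inductive typing :: "('s::bounded_semilattice_sup_bot, 'c, 'f, 'm, 'v) ctable \<Rightarrow> ('s, 'c, 'v) ctx
                     \<Rightarrow> ('s, 'c, 'f, 'm, 'v) expr \<Rightarrow> ('s, 'c) ty \<Rightarrow> bool"
  for CT :: "('s::bounded_semilattice_sup_bot, 'c, 'f, 'm, 'v) ctable" where
  T_Sub: "typing CT \<Gamma> e T' \<Longrightarrow> subtype CT T' T \<Longrightarrow> typing CT \<Gamma> e T"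
| T_Var: "\<Gamma> x = Some T \<Longrightarrow> typing CT \<Gamma> (Var x) T"
| T_Field: "typing CT \<Gamma> e0 (Ty s0 mdf0 C0) \<Longrightarrow> (Ty s1 mdf1 C1, f) \<in> set (fields CT C0)
      \<Longrightarrow> vp mdf0 mdf1 = Some md \<Longrightarrow> typing CT \<Gamma> (FAcc e0 f) (Ty (sup s0 s1) md C1)"
| T_Assign: "typing CT \<Gamma> e0 (Ty s0 Mut C0) \<Longrightarrow> typing CT \<Gamma> e1 (Ty (sup s0 s) md C)
      \<Longrightarrow> (Ty s md C, f) \<in> set (fields CT C0)
      \<Longrightarrow> typing CT \<Gamma> (FAssign e0 f e1) (Ty (sup s0 s) md C)"
| T_Call: "list_all2 (typing CT \<Gamma>) (e0 # es) (T0 # Ts)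
      \<Longrightarrow> (T0 # Ts, T) \<in> methTypes CT (cls T0) m
      \<Longrightarrow> sec T0 \<le> sec T
      \<Longrightarrow> (\<forall>Ti \<in> set Ts. mdf Ti \<in> {Mut, Capsule} \<longrightarrow> sec T0 \<le> sec Ti)
      \<Longrightarrow> typing CT \<Gamma> (Call e0 m es) T"
| T_New: "length es = length (fields CT C)
      \<Longrightarrow> (\<forall>i < length es. \<exists>Ti'. lift s (fst (fields CT C ! i)) = Some Ti'
                                \<and> typing CT \<Gamma> (es ! i) Ti')
      \<Longrightarrow> typing CT \<Gamma> (New s C es) (Ty s Mut C)"
| T_Prom: "typing CT (ctx_mut_read \<Gamma>) e (Ty s Mut C) \<Longrightarrow> typing CT \<Gamma> e (Ty s Capsule C)"
| T_SecProm: "s' \<le> s \<Longrightarrow> typing CT \<Gamma> e (Ty s' md C) \<Longrightarrow> md \<in> {Imm, Capsule}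
      \<Longrightarrow> typing CT \<Gamma> e (Ty s md C)"

(* refinement rules R1-R8: an abstract expression eA:[\<Gamma>;T] becomes e *)
inductive refine :: "('s::bounded_semilattice_sup_bot, 'c, 'f, 'm, 'v) ctable \<Rightarrow> ('s, 'c, 'v) ctx
                     \<Rightarrow> ('s, 'c) ty \<Rightarrow> ('s, 'c, 'f, 'm, 'v) expr \<Rightarrow> bool"
  for CT :: "('s::bounded_semilattice_sup_bot, 'c, 'f, 'm, 'v) ctable" where
  R1: "\<Gamma> x = Some T \<Longrightarrow> refine CT \<Gamma> T (Var x)"
| R2: "(Ty s md C, f) \<in> set (fields CT C0) \<Longrightarrow> s1 = sup s0 s
      \<Longrightarrow> refine CT \<Gamma> (Ty s1 md C) (FAssign (EAbs \<Gamma> (Ty s0 Mut C0)) f (EAbs \<Gamma> (Ty s1 md C)))"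
| R3: "(Ty s1 mdf1 C, f) \<in> set (fields CT C0) \<Longrightarrow> s = sup s0 s1 \<Longrightarrow> vp mdf0 mdf1 = Some md
      \<Longrightarrow> refine CT \<Gamma> (Ty s md C) (FAcc (EAbs \<Gamma> (Ty s0 mdf0 C0)) f)"
| R4: "(T0 # Ts, T) \<in> methTypes CT (cls T0) m \<Longrightarrow> sec T0 \<le> sec T
      \<Longrightarrow> (\<forall>Ti \<in> set Ts. mdf Ti \<in> {Mut, Capsule} \<longrightarrow> sec T0 \<le> sec Ti)
      \<Longrightarrow> refine CT \<Gamma> T (Call (EAbs \<Gamma> T0) m (map (EAbs \<Gamma>) Ts))"
| R5: "those (map (\<lambda>(Ti, fi). lift s Ti) (fields CT C)) = Some Ts
      \<Longrightarrow> refine CT \<Gamma> (Ty s Mut C) (New s C (map (EAbs \<Gamma>) Ts))"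
| R6: "subtype CT T' T \<Longrightarrow> refine CT \<Gamma> T (EAbs \<Gamma> T')"
| R7: "md \<in> {Capsule, Imm} \<Longrightarrow> s' \<le> s \<Longrightarrow> refine CT \<Gamma> (Ty s md C) (EAbs \<Gamma> (Ty s' md C))"
| R8: "refine CT \<Gamma> (Ty s Capsule C) (EAbs (ctx_mut_read \<Gamma>) (Ty s Mut C))"

inductive rstep :: "('s::bounded_semilattice_sup_bot, 'c, 'f, 'm, 'v) ctable
                    \<Rightarrow> ('s, 'c, 'f, 'm, 'v) expr \<Rightarrow> ('s, 'c, 'f, 'm, 'v) expr \<Rightarrow> bool"
  for CT :: "('s::bounded_semilattice_sup_bot, 'c, 'f, 'm, 'v) ctable" where
  here: "refine CT \<Gamma> T e \<Longrightarrow> rstep CT (EAbs \<Gamma> T) e"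
| assign_l: "rstep CT e0 e0' \<Longrightarrow> rstep CT (FAssign e0 f e1) (FAssign e0' f e1)"
| assign_r: "rstep CT e1 e1' \<Longrightarrow> rstep CT (FAssign e0 f e1) (FAssign e0 f e1')"
| acc: "rstep CT e0 e0' \<Longrightarrow> rstep CT (FAcc e0 f) (FAcc e0' f)"
| call_recv: "rstep CT e0 e0' \<Longrightarrow> rstep CT (Call e0 m es) (Call e0' m es)"
| call_arg: "rstep CT e e' \<Longrightarrow> rstep CT (Call e0 m (es1 @ e # es2)) (Call e0 m (es1 @ e' # es2))"
| new_arg: "rstep CT e e' \<Longrightarrow> rstep CT (New s C (es1 @ e # es2)) (New s C (es1 @ e' # es2))"

fun no_abs :: "('s, 'c, 'f, 'm, 'v) expr \<Rightarrow> bool" where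
  "no_abs (EAbs _ _) = False"
| "no_abs (Var _) = True"
| "no_abs (FAssign e0 _ e1) = (no_abs e0 \<and> no_abs e1)"
| "no_abs (FAcc e0 _) = no_abs e0"
| "no_abs (Call e0 _ es) = (no_abs e0 \<and> (\<forall>e \<in> set es. no_abs e))"
| "no_abs (New _ _ es) = (\<forall>e \<in> set es. no_abs e)"

end

theory Submission
  imports Defs
begin

inductive typingA :: "('s::bounded_semilattice_sup_bot, 'c, 'f, 'm, 'v) ctable \<Rightarrow> ('s, 'c, 'v) ctx
                     \<Rightarrow> ('s, 'c, 'f, 'm, 'v) expr \<Rightarrow> ('s, 'c) ty \<Rightarrow> bool"
  for CT :: "('s::bounded_semilattice_sup_bot, 'c, 'f, 'm, 'v) ctable" where
  A_Sub: "typingA CT \<Gamma> e T' \<Longrightarrow> subtype CT T' T \<Longrightarrow> typingA CT \<Gamma> e T"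
| A_Var: "\<Gamma> x = Some T \<Longrightarrow> typingA CT \<Gamma> (Var x) T"
| A_Field: "typingA CT \<Gamma> e0 (Ty s0 mdf0 C0) \<Longrightarrow> (Ty s1 mdf1 C1, f) \<in> set (fields CT C0)
      \<Longrightarrow> vp mdf0 mdf1 = Some md \<Longrightarrow> typingA CT \<Gamma> (FAcc e0 f) (Ty (sup s0 s1) md C1)"
| A_Assign: "typingA CT \<Gamma> e0 (Ty s0 Mut C0) \<Longrightarrow> typingA CT \<Gamma> e1 (Ty (sup s0 s) md C)
      \<Longrightarrow> (Ty s md C, f) \<in> set (fields CT C0)
      \<Longrightarrow> typingA CT \<Gamma> (FAssign e0 f e1) (Ty (sup s0 s) md C)"
| A_Call: "list_all2 (typingA CT \<Gamma>) (e0 # es) (T0 # Ts)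
      \<Longrightarrow> (T0 # Ts, T) \<in> methTypes CT (cls T0) m
      \<Longrightarrow> sec T0 \<le> sec T
      \<Longrightarrow> (\<forall>Ti \<in> set Ts. mdf Ti \<in> {Mut, Capsule} \<longrightarrow> sec T0 \<le> sec Ti)
      \<Longrightarrow> typingA CT \<Gamma> (Call e0 m es) T"
| A_New: "length es = length (fields CT C)
      \<Longrightarrow> (\<forall>i < length es. \<exists>Ti'. lift s (fst (fields CT C ! i)) = Some Ti'
                                \<and> typingA CT \<Gamma> (es ! i) Ti')
      \<Longrightarrow> typingA CT \<Gamma> (New s C es) (Ty s Mut C)"
| A_Prom: "typingA CT (ctx_mut_read \<Gamma>) e (Ty s Mut C) \<Longrightarrow> typingA CT \<Gamma> e (Ty s Capsule C)"
| A_SecProm: "s' \<le> s \<Longrightarrow> typingA CT \<Gamma> e (Ty s' md C) \<Longrightarrow> md \<in> {Imm, Capsule}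
      \<Longrightarrow> typingA CT \<Gamma> e (Ty s md C)"
| A_Abs: "typingA CT \<Gamma> (EAbs \<Gamma> T) T"

lemma those_Some: "those xs = Some ys \<Longrightarrow> list_all2 (\<lambda>x y. x = Some y) xs ys"
proof (induction xs arbitrary: ys)
  case Nil then show ?case by simp
next
  case (Cons a xs) then show ?case by (auto split: option.splits)
qed

lemma refine_typingA: "refine CT \<Gamma> T e \<Longrightarrow> typingA CT \<Gamma> e T"
proof (induction rule: refine.induct)
  case (R1 \<Gamma> x T) then show ?case by (rule A_Var)
next
  case R2 then show ?case by (auto intro!: A_Assign A_Abs)
next
  case (R3 s1 mdf1 C f C0 s s0 mdf0 md \<Gamma>) then show ?case
    using A_Field[OF A_Abs] by auto
next
  case (R4 T0 Ts T m \<Gamma>)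
  have "list_all2 (typingA CT \<Gamma>) (map (EAbs \<Gamma>) Ts) Ts"
    by (induction Ts) (auto intro: A_Abs)
  then have "list_all2 (typingA CT \<Gamma>) (EAbs \<Gamma> T0 # map (EAbs \<Gamma>) Ts) (T0 # Ts)"
    by (simp add: A_Abs)
  then show ?case using R4 by (simp add: A_Call)
next
  case (R5 s C Ts \<Gamma>)
  have l: "list_all2 (\<lambda>x y. x = Some y) (map (\<lambda>(Ti, fi). lift s Ti) (fields CT C)) Ts"
    using those_Some[OF R5] .
  then have len: "length Ts = length (fields CT C)" by (simp add: list_all2_conv_all_nth)
  have "\<forall>i < length Ts. lift s (fst (fields CT C ! i)) = Some (Ts ! i)"
    using l by (auto simp: list_all2_conv_all_nth split: prod.splits) (metis prod.collapse)
  then show ?case using len by (intro A_New) (auto intro: A_Abs)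
next
  case (R6 T' T \<Gamma>) then show ?case by (rule A_Sub[OF A_Abs])
next
  case R7 then show ?case by (intro A_SecProm[OF _ A_Abs]) auto
next
  case (R8 \<Gamma> s C) then show ?case by (rule A_Prom[OF A_Abs])
qed

lemma list_all2_upd:
  assumes "list_all2 (\<lambda>a b. P a b \<and> (\<forall>a'. R a a' \<longrightarrow> P a' b)) (es1 @ e # es2) ys"
    and "R e e'"
  shows "list_all2 P (es1 @ e' # es2) ys"
proof -
  from assms(1) obtain us z zs where ys: "ys = us @ z # zs" and l: "length us = length es1"
    and a: "list_all2 (\<lambda>a b. P a b \<and> (\<forall>a'. R a a' \<longrightarrow> P a' b)) es1 us"
    and b: "P e z" "\<forall>a'. R e a' \<longrightarrow> P a' z"
    and c: "list_all2 (\<lambda>a b. P a b \<and> (\<forall>a'. R a a' \<longrightarrow> P a' b)) es2 zs"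
    by (auto simp: list_all2_append1 list_all2_Cons1)
  have a': "list_all2 P es1 us" using a by (rule list_all2_mono) simp
  have c': "list_all2 P es2 zs" using c by (rule list_all2_mono) simp
  show ?thesis unfolding ys using l a' c' b assms(2)
    by (intro list_all2_appendI) auto
qed

lemma pres: "typingA CT \<Gamma> e T \<Longrightarrow> rstep CT e e' \<Longrightarrow> typingA CT \<Gamma> e' T"
proof (induction arbitrary: e' rule: typingA.induct)
  case (A_Sub \<Gamma> e T' T) then show ?case by (meson typingA.A_Sub)
next
  case (A_Var \<Gamma> x T) then show ?case by (auto elim: rstep.cases)
next
  case (A_Field \<Gamma> e0 s0 mdf0 C0 s1 mdf1 C1 f md)
  from A_Field.prems show ?case
    by (cases rule: rstep.cases) (auto intro: typingA.A_Field A_Field.IH A_Field.hyps)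
next
  case (A_Assign \<Gamma> e0 s0 C0 e1 s md C f)
  from A_Assign.prems show ?case
    by (cases rule: rstep.cases) (auto intro: typingA.A_Assign A_Assign.IH A_Assign.hyps)
next
  case (A_Call \<Gamma> e0 es T0 Ts T m)
  from A_Call.prems show ?case
  proof (cases rule: rstep.cases)
    case (call_recv e0')
    have h: "list_all2 (\<lambda>a b. typingA CT \<Gamma> a b \<and> (\<forall>a'. rstep CT a a' \<longrightarrow> typingA CT \<Gamma> a' b))
             (e0 # es) (T0 # Ts)" using A_Call.IH by simp
    then have "list_all2 (typingA CT \<Gamma>) es Ts" by (auto elim: list_all2_mono)
    moreover have "typingA CT \<Gamma> e0' T0" using h call_recv by simp
    ultimately show ?thesis using A_Call.hyps call_recv by (auto intro!: typingA.A_Call)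
  next
    case (call_arg e e'' es1 es2)
    have "list_all2 (\<lambda>a b. typingA CT \<Gamma> a b \<and> (\<forall>a'. rstep CT a a' \<longrightarrow> typingA CT \<Gamma> a' b))
             (es1 @ e # es2) Ts" using A_Call.IH call_arg by simp
    from list_all2_upd[OF this call_arg(3)]
    have "list_all2 (typingA CT \<Gamma>) (es1 @ e'' # es2) Ts" .
    moreover have "typingA CT \<Gamma> e0 T0" using A_Call.IH by simp
    ultimately show ?thesis using A_Call.hyps call_arg by (auto intro!: typingA.A_Call)
  qed
next
  case (A_New es C s \<Gamma>)
  from A_New.prems show ?case
  proof (cases rule: rstep.cases)
    case (new_arg e e'' es1 es2)
    have "\<forall>i < length (es1 @ e'' # es2). \<exists>Ti'. lift s (fst (fields CT C ! i)) = Some Ti'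
                                \<and> typingA CT \<Gamma> ((es1 @ e'' # es2) ! i) Ti'"
    proof (intro allI impI)
      fix i assume i: "i < length (es1 @ e'' # es2)"
      then have i': "i < length es" using new_arg by simp
      from A_New.IH i' obtain Ti' where
        h: "lift s (fst (fields CT C ! i)) = Some Ti'" "typingA CT \<Gamma> (es ! i) Ti'"
           "\<forall>e'. rstep CT (es ! i) e' \<longrightarrow> typingA CT \<Gamma> e' Ti'" by blast
      show "\<exists>Ti'. lift s (fst (fields CT C ! i)) = Some Ti'
                                \<and> typingA CT \<Gamma> ((es1 @ e'' # es2) ! i) Ti'"
      proof (cases "i = length es1")
        case True
        then show ?thesis using h new_arg by (auto simp: nth_append)
      next
        case False
        then have "(es1 @ e'' # es2) ! i = es ! i" using new_arg
          by (auto simp: nth_append nth_Cons split: nat.splits)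
        then show ?thesis using h by auto
      qed
    qed
    then show ?thesis using A_New.hyps(1) new_arg by (auto intro!: typingA.A_New)
  qed
next
  case (A_Prom \<Gamma> e s C) then show ?case by (meson typingA.A_Prom)
next
  case (A_SecProm s' s \<Gamma> e md C) then show ?case by (meson typingA.A_SecProm)
next
  case (A_Abs \<Gamma> T)
  from A_Abs.prems show ?case
    by (cases rule: rstep.cases) (auto intro: refine_typingA)
qed

lemma list_all2_imp:
  "list_all2 (\<lambda>a b. Q a b \<and> (P a \<longrightarrow> R a b)) xs ys \<Longrightarrow> \<forall>x\<in>set xs. P x \<Longrightarrow> list_all2 R xs ys"
  by (induction xs arbitrary: ys) (auto simp: list_all2_Cons1)

lemma to_typing: "typingA CT \<Gamma> e T \<Longrightarrow> no_abs e \<Longrightarrow> typing CT \<Gamma> e T"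
proof (induction rule: typingA.induct)
  case (A_Call \<Gamma> e0 es T0 Ts T m)
  have "\<forall>x\<in>set (e0 # es). no_abs x" using A_Call.prems by simp
  with A_Call.IH have "list_all2 (typing CT \<Gamma>) (e0 # es) (T0 # Ts)"
    by (rule list_all2_imp)
  then show ?case using A_Call.hyps by (rule typing.T_Call)
next
  case (A_New es C s \<Gamma>)
  have "\<forall>i < length es. \<exists>Ti'. lift s (fst (fields CT C ! i)) = Some Ti'
                                \<and> typing CT \<Gamma> (es ! i) Ti'"
  proof (intro allI impI)
    fix i assume i: "i < length es"
    then have "no_abs (es ! i)" using A_New.prems by simp
    with A_New.IH i show "\<exists>Ti'. lift s (fst (fields CT C ! i)) = Some Ti'
                                \<and> typing CT \<Gamma> (es ! i) Ti'" by blast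
  qed
  with A_New.hyps show ?case by (rule typing.T_New)
next
  case (A_Sub \<Gamma> e T' T) then show ?case by (meson typing.T_Sub)
next
  case (A_Var \<Gamma> x T) then show ?case by (simp add: typing.T_Var)
next
  case (A_Field \<Gamma> e0 s0 mdf0 C0 s1 mdf1 C1 f md) then show ?case by (simp add: typing.T_Field)
next
  case (A_Assign \<Gamma> e0 s0 C0 e1 s md C f) then show ?case by (simp add: typing.T_Assign)
next
  case (A_Prom \<Gamma> e s C) then show ?case by (meson typing.T_Prom)
next
  case (A_SecProm s' s \<Gamma> e md C) then show ?case by (meson typing.T_SecProm)
next
  case (A_Abs \<Gamma> T) then show ?case by simp
qed

theorem theorem1:
  fixes CT :: "('s::bounded_semilattice_sup_bot, 'c, 'f, 'm, 'v) ctable"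
    and \<Gamma> :: "('s, 'c, 'v) ctx" and T :: "('s, 'c) ty"
    and e :: "('s, 'c, 'f, 'm, 'v) expr"
  assumes "wf_fields CT"
    and "(rstep CT)\<^sup>*\<^sup>* (EAbs \<Gamma> T) e"
    and "no_abs e"
  shows "typing CT \<Gamma> e T"
proof -
  have "typingA CT \<Gamma> e T" using assms(2)
    by (induction rule: rtranclp_induct) (auto intro: A_Abs pres)
  then show ?thesis using assms(3) by (rule to_typing)
qed

end
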